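(* Let $h=(X,E,\mathit{in}_0)$ be a flow graph over a flow monoid $\mathbb{M}$ all of whose edge functions are continuous and distributive. Then for every inflow $\mathit{in}:(\mathbb{N}\setminus X)\times X\to\mathbb{M}$, every $y\in X$ and every $z\in\mathbb{N}\setminus X$, $$\mathsf{tf}(h)(\mathit{in})(y,z)=\sum_{x\in X}\ \sum_{p\in\mathrm{Paths}_h(x\to(y,z))}E_p(\mathit{in}_x).$$
   Context: A flow monoid is a commutative monoid $(\mathbb{M},+,0)$ such that $n\le m :\iff \exists o.\ m=n+o$ is a partial order in which every ascending chain $K$ has a least upper bound $\bigsqcup K$, and $n+\bigsqcup K=\bigsqcup(n+K)$. $\mathcal{C}(\mathbb{M}\to\mathbb{M})$ is the set of functions commuting with least upper bounds of ascending chains (continuous). A function $f$ is distributive if $f(m+n)=f(m)+f(n)$ for all $m,n$ and $f(0)=0$. Infinite sums denote least upper bounds of the ascending chain of finite partial sums; empty sums are $0$. A flow graph is $h=(X,E,\mathit{in})$ with $X\subseteq\mathbb{N}$ finite, $E:X\times\mathbb{N}\to\mathcal{C}(\mathbb{M}\to\mathbb{M})$, $\mathit{in}:(\mathbb{N}\setminus X)\times X\to\mathbb{M}$; $\mathit{in}_x=\sum_{y\in\mathbb{N}\setminus X}\mathit{in}(y,x)$; the flow is the least $\mathit{flow}:X\to\mathbb{M}$ with $\mathit{flow}(x)=\mathit{in}_x+\sum_{y\in X}E(y,x)(\mathit{flow}(y))$; the outflow is $\mathit{out}(x,y)=E(x,y)(\mathit{flow}(x))$ for $x\in X$, $y\notin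 X$. The transfer function $\mathsf{tf}(h)(\mathit{in}')$ is the outflow of $(X,E,\mathit{in}')$. A path through $h$ is a sequence $p=x_0x_1\cdots x_nz$ with $n\ge0$, $x_i\in X$, $z\in\mathbb{N}\setminus X$; $\mathrm{first}(p)=x_0$, $\mathrm{last}(p)=x_n$. $\mathrm{Paths}_h(x\to(y,z))$ is the set of paths with $x_0=x$, $x_n=y$ and final element $z$. Its edge function is $E_p=E(x_n,z)\circ E(x_{n-1},x_n)\circ\cdots\circ E(x_0,x_1)$. *)

theory Defs
  imports Main
begin

definition mle :: "'m::comm_monoid_add \<Rightarrow> 'm \<Rightarrow> bool" where
  "mle n m \<longleftrightarrow> (\<exists>d. m = n + d)"

definition is_lub :: "'m::comm_monoid_add set \<Rightarrow> 'm \<Rightarrow> bool" where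
  "is_lub S u \<longleftrightarrow> (\<forall>s\<in>S. mle s u) \<and> (\<forall>v. (\<forall>s\<in>S. mle s v) \<longrightarrow> mle u v)"

definition lub :: "'m::comm_monoid_add set \<Rightarrow> 'm" where
  "lub S = (THE u. is_lub S u)"

definition asc_chain :: "(nat \<Rightarrow> 'm::comm_monoid_add) \<Rightarrow> bool" where
  "asc_chain K \<longleftrightarrow> (\<forall>i. mle (K i) (K (Suc i)))"

definition flow_monoid :: "'m::comm_monoid_add itself \<Rightarrow> bool" where
  "flow_monoid _ \<longleftrightarrow>
     (\<forall>a b::'m. mle a b \<and> mle b a \<longrightarrow> a = b) \<and>
     (\<forall>K::nat \<Rightarrow> 'm. asc_chain K \<longrightarrow> (\<exists>u. is_lub (range K) u)) \<and>
     (\<forall>(K::nat \<Rightarrow> 'm) n. asc_chain K \<longrightarrow> is_lub (range (\<lambda>i. n + K i)) (n + lub (range K)))"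

definition mcont :: "('m::comm_monoid_add \<Rightarrow> 'm) \<Rightarrow> bool" where
  "mcont f \<longleftrightarrow> (\<forall>K. asc_chain K \<longrightarrow> is_lub (range (\<lambda>i. f (K i))) (f (lub (range K))))"

definition distributive :: "('m::comm_monoid_add \<Rightarrow> 'm) \<Rightarrow> bool" where
  "distributive f \<longleftrightarrow> (\<forall>m n. f (m + n) = f m + f n) \<and> f 0 = 0"

definition msum :: "('a \<Rightarrow> 'm::comm_monoid_add) \<Rightarrow> 'a set \<Rightarrow> 'm" where
  "msum f S = lub {sum f F | F. finite F \<and> F \<subseteq> S}"

text \<open>A flow graph is a triple (X, E, in) with X a finite set of naturals,
  E x y the edge function from x \<in> X to y, and in y x the inflow from y \<notin> X to x \<in> X.\<close>
type_synonym 'm flow_graph = "nat set \<times> (nat \<Rightarrow> nat \<Rightarrow> 'm \<Rightarrow> 'm) \<times> (nat \<Rightarrow> nat \<Rightarrow> 'm)"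

definition inflow_at :: "nat set \<Rightarrow> (nat \<Rightarrow> nat \<Rightarrow> 'm::comm_monoid_add) \<Rightarrow> nat \<Rightarrow> 'm" where
  "inflow_at X infl x = msum (\<lambda>y. infl y x) (- X)"

definition is_flow :: "nat set \<Rightarrow> (nat \<Rightarrow> nat \<Rightarrow> 'm \<Rightarrow> 'm) \<Rightarrow> (nat \<Rightarrow> nat \<Rightarrow> 'm::comm_monoid_add)
    \<Rightarrow> (nat \<Rightarrow> 'm) \<Rightarrow> bool" where
  "is_flow X E infl fl \<longleftrightarrow>
     (\<forall>x\<in>X. fl x = inflow_at X infl x + (\<Sum>y\<in>X. E y x (fl y)))"

definition flow :: "nat set \<Rightarrow> (nat \<Rightarrow> nat \<Rightarrow> 'm \<Rightarrow> 'm) \<Rightarrow> (nat \<Rightarrow> nat \<Rightarrow> 'm::comm_monoid_add)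
    \<Rightarrow> nat \<Rightarrow> 'm" where
  "flow X E infl = (THE fl. is_flow X E infl fl \<and>
       (\<forall>fl'. is_flow X E infl fl' \<longrightarrow> (\<forall>x\<in>X. mle (fl x) (fl' x))) \<and>
       (\<forall>x. x \<notin> X \<longrightarrow> fl x = 0))"

definition outflow :: "nat set \<Rightarrow> (nat \<Rightarrow> nat \<Rightarrow> 'm \<Rightarrow> 'm) \<Rightarrow> (nat \<Rightarrow> nat \<Rightarrow> 'm::comm_monoid_add)
    \<Rightarrow> nat \<Rightarrow> nat \<Rightarrow> 'm" where
  "outflow X E infl x y = (if x \<in> X \<and> y \<notin> X then E x y (flow X E infl x) else 0)"

definition tf :: "'m::comm_monoid_add flow_graph \<Rightarrow> (nat \<Rightarrow> nat \<Rightarrow> 'm) \<Rightarrow> nat \<Rightarrow> nat \<Rightarrow> 'm" where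
  "tf h infl' = (case h of (X, E, _) \<Rightarrow> outflow X E infl')"

text \<open>A path x0 x1 ... xn z is represented by the nonempty list [x0,...,xn] (all in X)
  together with the exit node z.  Paths_h(x \<rightarrow> (y,z)) for fixed z is the set of such lists.\<close>
definition paths :: "'m flow_graph \<Rightarrow> nat \<Rightarrow> nat \<Rightarrow> nat \<Rightarrow> nat list set" where
  "paths h x y z = (case h of (X, E, _) \<Rightarrow>
     (if z \<notin> X then {xs. xs \<noteq> [] \<and> set xs \<subseteq> X \<and> hd xs = x \<and> last xs = y} else {}))"

fun inner_edges :: "(nat \<Rightarrow> nat \<Rightarrow> 'm \<Rightarrow> 'm) \<Rightarrow> nat list \<Rightarrow> 'm \<Rightarrow> 'm" where
  "inner_edges E [] = id"
| "inner_edges E [x] = id"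
| "inner_edges E (x # x' # xs) = inner_edges E (x' # xs) \<circ> E x x'"

definition path_fun :: "(nat \<Rightarrow> nat \<Rightarrow> 'm \<Rightarrow> 'm) \<Rightarrow> nat list \<Rightarrow> nat \<Rightarrow> 'm \<Rightarrow> 'm" where
  "path_fun E xs z = E (last xs) z \<circ> inner_edges E xs"

end

theory Submission
  imports Defs
begin


lemma mle_refl: "mle (a::'m::comm_monoid_add) a"
  unfolding mle_def by (rule exI[of _ 0]) simp

lemma mle_trans: "mle (a::'m::comm_monoid_add) b \<Longrightarrow> mle b c \<Longrightarrow> mle a c"
  unfolding mle_def by (metis add.assoc)

lemma mle_0: "mle 0 (a::'m::comm_monoid_add)"
  unfolding mle_def by simp

lemma mle_add_right: "mle (a::'m::comm_monoid_add) (a + b)"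
  unfolding mle_def by blast

lemma mle_add_mono: "mle (a::'m::comm_monoid_add) b \<Longrightarrow> mle c d \<Longrightarrow> mle (a + c) (b + d)"
  unfolding mle_def by (metis add.assoc add.commute)

lemma mle_sum_mono: "(\<And>x. x \<in> S \<Longrightarrow> mle (f x) (g x)) \<Longrightarrow> mle (sum f S) (sum (g::_\<Rightarrow>'m::comm_monoid_add) S)"
proof (induction S rule: infinite_finite_induct)
  case (infinite A) then show ?case by (simp add: mle_refl)
next
  case empty then show ?case by (simp add: mle_refl)
next
  case (insert x F) then show ?case by (simp add: mle_add_mono)
qed

lemma mle_sum_subset: "finite B \<Longrightarrow> A \<subseteq> B \<Longrightarrow> mle (sum f A) (sum (f::_\<Rightarrow>'m::comm_monoid_add) B)"
  using sum.subset_diff[of A B f] unfolding mle_def by (metis add.commute)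

lemma asc_chain_mono: "asc_chain K \<Longrightarrow> i \<le> j \<Longrightarrow> mle (K i) (K j)"
proof (induction j)
  case 0 then show ?case by (simp add: mle_refl)
next
  case (Suc j)
  then show ?case
    by (metis asc_chain_def le_Suc_eq mle_refl mle_trans)
qed

lemma is_lub_ub: "is_lub S u \<Longrightarrow> s \<in> S \<Longrightarrow> mle s u"
  unfolding is_lub_def by blast

lemma is_lub_least: "is_lub S u \<Longrightarrow> (\<And>s. s \<in> S \<Longrightarrow> mle s v) \<Longrightarrow> mle u v"
  unfolding is_lub_def by blast

lemma is_lub_same_ub:
  assumes "\<And>v. (\<forall>s\<in>S. mle s v) \<longleftrightarrow> (\<forall>t\<in>T. mle t v)" "is_lub S u"
  shows "is_lub T u"
  using assms unfolding is_lub_def by blast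

lemma is_lub_const: "is_lub (range (\<lambda>_::nat. c)) (c::'m::comm_monoid_add)"
  unfolding is_lub_def by (auto simp: mle_refl)

lemma sum_mle_dist_mono: "distributive f \<Longrightarrow> mle a b \<Longrightarrow> mle (f a) (f (b::'m::comm_monoid_add))"
  unfolding distributive_def mle_def by metis

lemma dist_sum: "distributive f \<Longrightarrow> f (sum g S) = (\<Sum>x\<in>S. f (g x :: 'm::comm_monoid_add))"
proof (induction S rule: infinite_finite_induct)
  case (insert x F) then show ?case by (simp add: distributive_def)
qed (auto simp: distributive_def)

lemma asc_chain_sum: "(\<And>x. x \<in> X \<Longrightarrow> asc_chain (K x)) \<Longrightarrow> asc_chain (\<lambda>n. \<Sum>x\<in>X. (K x n :: 'm::comm_monoid_add))"
  unfolding asc_chain_def by (auto intro: mle_sum_mono)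

lemma asc_chain_add: "asc_chain a \<Longrightarrow> asc_chain b \<Longrightarrow> asc_chain (\<lambda>n. a n + (b n :: 'm::comm_monoid_add))"
  unfolding asc_chain_def by (auto intro: mle_add_mono)

lemma asc_chain_dist: "distributive f \<Longrightarrow> asc_chain K \<Longrightarrow> asc_chain (\<lambda>n. f (K n :: 'm::comm_monoid_add))"
  unfolding asc_chain_def by (auto intro: sum_mle_dist_mono)

context
  assumes FM: "flow_monoid TYPE('m::comm_monoid_add)"
begin

lemma mle_antisym: "mle (a::'m) b \<Longrightarrow> mle b a \<Longrightarrow> a = b"
  using FM unfolding flow_monoid_def by blast

lemma is_lub_unique: "is_lub S (u::'m) \<Longrightarrow> is_lub S v \<Longrightarrow> u = v"
  unfolding is_lub_def by (blast intro: mle_antisym)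

lemma lub_eq: "is_lub S (u::'m) \<Longrightarrow> lub S = u"
  unfolding lub_def using is_lub_unique by blast

lemma chain_lub: "asc_chain (K::nat\<Rightarrow>'m) \<Longrightarrow> is_lub (range K) (lub (range K))"
  using FM unfolding flow_monoid_def by (metis lub_eq)

lemma chain_lub_add: "asc_chain (K::nat\<Rightarrow>'m) \<Longrightarrow> is_lub (range (\<lambda>i. n + K i)) (n + lub (range K))"
  using FM unfolding flow_monoid_def by blast

lemma mcont_lub: "mcont f \<Longrightarrow> asc_chain (K::nat\<Rightarrow>'m) \<Longrightarrow> f (lub (range K)) = lub (range (\<lambda>i. f (K i)))"
  unfolding mcont_def by (metis lub_eq)

lemma lub_shift: "asc_chain (K::nat\<Rightarrow>'m) \<Longrightarrow> lub (range (\<lambda>n. K (Suc n))) = lub (range K)"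
proof -
  assume c: "asc_chain K"
  have "is_lub (range (\<lambda>n. K (Suc n))) (lub (range K))"
  proof (rule is_lub_same_ub[OF _ chain_lub[OF c]])
    fix v
    show "(\<forall>s\<in>range K. mle s v) = (\<forall>t\<in>range (\<lambda>n. K (Suc n)). mle t v)"
      using c unfolding asc_chain_def by (auto, metis mle_trans not0_implies_Suc)
  qed
  then show ?thesis by (rule lub_eq)
qed

lemma lub_add:
  assumes a: "asc_chain (a::nat\<Rightarrow>'m)" and b: "asc_chain b"
  shows "is_lub (range (\<lambda>n. a n + b n)) (lub (range a) + lub (range b))"
  unfolding is_lub_def
proof (intro conjI allI impI ballI)
  fix s assume "s \<in> range (\<lambda>n. a n + b n)"
  then obtain n where "s = a n + b n" by auto
  then show "mle s (lub (range a) + lub (range b))"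
    using is_lub_ub[OF chain_lub[OF a]] is_lub_ub[OF chain_lub[OF b]]
    by (simp add: mle_add_mono)
next
  fix v assume v: "\<forall>s\<in>range (\<lambda>n. a n + b n). mle s v"
  have ij: "mle (a i + b j) v" for i j
  proof -
    have "mle (a i + b j) (a (max i j) + b (max i j))"
      by (intro mle_add_mono asc_chain_mono[OF a] asc_chain_mono[OF b]) auto
    then show ?thesis using v mle_trans by blast
  qed
  have ci: "mle (a i + lub (range b)) v" for i
  proof -
    have "is_lub (range (\<lambda>j. a i + b j)) (a i + lub (range b))"
      by (rule chain_lub_add[OF b])
    then show ?thesis using ij is_lub_least by blast
  qed
  have "is_lub (range (\<lambda>i. lub (range b) + a i)) (lub (range b) + lub (range a))"
    by (rule chain_lub_add[OF a])
  then have "mle (lub (range b) + lub (range a)) v"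
    by (rule is_lub_least) (use ci in \<open>auto simp: add.commute\<close>)
  then show "mle (lub (range a) + lub (range b)) v" by (simp add: add.commute)
qed

lemma lub_sum:
  assumes "finite X" "\<And>x. x \<in> X \<Longrightarrow> asc_chain (K x :: nat \<Rightarrow> 'm)"
  shows "is_lub (range (\<lambda>n. \<Sum>x\<in>X. K x n)) (\<Sum>x\<in>X. lub (range (K x)))"
  using assms
proof (induction X rule: finite_induct)
  case empty then show ?case using is_lub_const by simp
next
  case (insert x F)
  have b: "asc_chain (\<lambda>n. \<Sum>x\<in>F. K x n)" using insert by (intro asc_chain_sum) auto
  have e: "lub (range (\<lambda>n. \<Sum>x\<in>F. K x n)) = (\<Sum>x\<in>F. lub (range (K x)))"
    using insert by (intro lub_eq) auto
  show ?case using lub_add[OF insert(4)[of x] b] insert(1,2) e by simp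
qed

lemma msum_chain:
  assumes fin: "\<And>n. finite (A n)" and mono: "\<And>n. A n \<subseteq> A (Suc n)" and U: "(\<Union>n. A n) = S"
  shows "msum (f::_\<Rightarrow>'m) S = lub (range (\<lambda>n. sum f (A n)))"
proof -
  have c: "asc_chain (\<lambda>n. sum f (A n))"
    unfolding asc_chain_def using fin mono by (auto intro: mle_sum_subset)
  have cover: "finite F \<Longrightarrow> F \<subseteq> S \<Longrightarrow> \<exists>n. F \<subseteq> A n" for F
  proof (induction F rule: finite_induct)
    case empty then show ?case by simp
  next
    case (insert x F)
    then obtain n where n: "F \<subseteq> A n" by auto
    from insert U obtain m where m: "x \<in> A m" by auto
    have "A n \<subseteq> A (max n m)" "A m \<subseteq> A (max n m)"
      by (rule lift_Suc_mono_le[of A, OF mono], simp)+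
    then show ?case using n m by blast
  qed
  have "is_lub {sum f F | F. finite F \<and> F \<subseteq> S} (lub (range (\<lambda>n. sum f (A n))))"
  proof (rule is_lub_same_ub[OF _ chain_lub[OF c]])
    fix v
    show "(\<forall>s\<in>range (\<lambda>n. sum f (A n)). mle s v) = (\<forall>t\<in>{sum f F |F. finite F \<and> F \<subseteq> S}. mle t v)"
    proof
      assume "\<forall>t\<in>{sum f F |F. finite F \<and> F \<subseteq> S}. mle t v"
      then show "\<forall>s\<in>range (\<lambda>n. sum f (A n)). mle s v" using fin U by blast
    next
      assume h: "\<forall>s\<in>range (\<lambda>n. sum f (A n)). mle s v"
      show "\<forall>t\<in>{sum f F |F. finite F \<and> F \<subseteq> S}. mle t v"
      proof safe
        fix F assume "finite F" "F \<subseteq> S"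
        then obtain n where "F \<subseteq> A n" using cover by blast
        then have "mle (sum f F) (sum f (A n))" using fin by (intro mle_sum_subset)
        then show "mle (sum f F) v" using h mle_trans by blast
      qed
    qed
  qed
  then show ?thesis unfolding msum_def by (rule lub_eq)
qed

end



fun kit :: "nat set \<Rightarrow> (nat \<Rightarrow> nat \<Rightarrow> 'm \<Rightarrow> 'm) \<Rightarrow> (nat \<Rightarrow> nat \<Rightarrow> 'm::comm_monoid_add) \<Rightarrow> nat \<Rightarrow> nat \<Rightarrow> 'm" where
  "kit X E infl 0 x = 0"
| "kit X E infl (Suc n) x = (if x \<in> X then inflow_at X infl x + (\<Sum>y\<in>X. E y x (kit X E infl n y)) else 0)"

definition Pn :: "nat set \<Rightarrow> nat \<Rightarrow> nat \<Rightarrow> nat \<Rightarrow> nat list set" where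
  "Pn X n x y = {p. p \<noteq> [] \<and> set p \<subseteq> X \<and> hd p = x \<and> last p = y \<and> length p \<le> n}"

lemma inner_snoc: "p \<noteq> [] \<Longrightarrow> inner_edges E (p @ [y]) = E (last p) y \<circ> inner_edges E p"
  by (induction p rule: induct_list012) (auto simp: comp_assoc)

lemma Pn_finite: "finite X \<Longrightarrow> finite (Pn X n x y)"
  unfolding Pn_def by (rule finite_subset[OF _ finite_lists_length_le[of X n]]) auto

lemma Pn_0: "Pn X 0 x y = {}"
  unfolding Pn_def by auto

lemma Pn_mono: "Pn X n x y \<subseteq> Pn X (Suc n) x y"
  unfolding Pn_def by auto

lemma Pn_Suc:
  assumes yX: "y \<in> X"
  shows "Pn X (Suc n) x y = (if x = y then {[y]} else {}) \<union> (\<Union>w\<in>X. (\<lambda>p. p @ [y]) ` Pn X n x w)"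
proof (rule set_eqI)
  fix q
  show "q \<in> Pn X (Suc n) x y \<longleftrightarrow> q \<in> (if x = y then {[y]} else {}) \<union> (\<Union>w\<in>X. (\<lambda>p. p @ [y]) ` Pn X n x w)"
  proof
    assume q: "q \<in> Pn X (Suc n) x y"
    have q1: "q \<noteq> []" "set q \<subseteq> X" "hd q = x" "last q = y" "length q \<le> Suc n"
      using q unfolding Pn_def by auto
    have qe: "q = butlast q @ [y]" using q1 append_butlast_last_id by metis
    show "q \<in> (if x = y then {[y]} else {}) \<union> (\<Union>w\<in>X. (\<lambda>p. p @ [y]) ` Pn X n x w)"
    proof (cases "butlast q = []")
      case True
      then have "q = [y]" using qe by simp
      then show ?thesis using q1 by simp
    next
      case False
      have "butlast q \<in> Pn X n x (last (butlast q))"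
        unfolding Pn_def
      proof (intro CollectI conjI)
        show "butlast q \<noteq> []" by (rule False)
        show "set (butlast q) \<subseteq> X" using q1(2) in_set_butlastD by fastforce
        show "hd (butlast q) = x" using q1(3) False qe by (metis hd_append2)
        show "last (butlast q) = last (butlast q)" by (rule refl)
        show "length (butlast q) \<le> n" using q1(5) by simp
      qed
      moreover have "last (butlast q) \<in> X"
        using q1(2) False by (meson in_set_butlastD last_in_set subsetD)
      ultimately show ?thesis using qe by blast
    qed
  next
    assume "q \<in> (if x = y then {[y]} else {}) \<union> (\<Union>w\<in>X. (\<lambda>p. p @ [y]) ` Pn X n x w)"
    then consider "x = y" "q = [y]" | w p where "w \<in> X" "p \<in> Pn X n x w" "q = p @ [y]"
      by (auto split: if_splits)
    then show "q \<in> Pn X (Suc n) x y"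
    proof cases
      case 1 then show ?thesis using yX unfolding Pn_def by simp
    next
      case 2 then show ?thesis using yX unfolding Pn_def by auto
    qed
  qed
qed

context
  assumes FM: "flow_monoid TYPE('m::comm_monoid_add)"
begin

lemma kit_step:
  assumes H: "\<forall>x\<in>X. \<forall>w. mcont (E x w) \<and> distributive (E x w)"
  shows "mle (kit X E infl n x) (kit X E infl (Suc n) (x::nat) :: 'm)"
proof (induction n arbitrary: x)
  case 0 then show ?case by (simp add: mle_0)
next
  case (Suc n)
  have sm: "mle (\<Sum>y\<in>X. E y x (kit X E infl n y)) (\<Sum>y\<in>X. E y x (kit X E infl (Suc n) y))"
  proof (rule mle_sum_mono)
    fix y assume "y \<in> X"
    then have "distributive (E y x)" using H by blast
    then show "mle (E y x (kit X E infl n y)) (E y x (kit X E infl (Suc n) y))"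
      using Suc.IH by (rule sum_mle_dist_mono)
  qed
  then show ?case
  proof (cases "x \<in> X")
    case True
    have e1: "kit X E infl (Suc n) x = inflow_at X infl x + (\<Sum>y\<in>X. E y x (kit X E infl n y))"
      using kit.simps(2)[of X E infl n x] True by (simp only: if_True)
    have e2: "kit X E infl (Suc (Suc n)) x = inflow_at X infl x + (\<Sum>y\<in>X. E y x (kit X E infl (Suc n) y))"
      using kit.simps(2)[of X E infl "Suc n" x] True by (simp only: if_True)
    show ?thesis unfolding e1 e2 by (rule mle_add_mono[OF mle_refl sm])
  next
    case False then show ?thesis by (simp add: mle_refl)
  qed
qed

lemma kit_chain:
  assumes H: "\<forall>x\<in>X. \<forall>w. mcont (E x w) \<and> distributive (E x w)"
  shows "asc_chain (\<lambda>n. kit X E infl n x :: 'm)"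
  unfolding asc_chain_def using kit_step[OF H] by blast

lemma flow_eq:
  assumes fin: "finite X" and H: "\<forall>x\<in>X. \<forall>w. mcont (E x w) \<and> distributive (E x w)"
  shows "flow X E infl = (\<lambda>x. lub (range (\<lambda>n. kit X E infl n x :: 'm)))"
proof -
  define F where "F = (\<lambda>x. lub (range (\<lambda>n. kit X E infl n x :: 'm)))"
  have ch: "asc_chain (\<lambda>n. kit X E infl n x)" for x using kit_chain[OF H] .
  have out: "F x = 0" if "x \<notin> X" for x
  proof -
    have e: "(\<lambda>n. kit X E infl n x) = (\<lambda>_. 0)"
      using that by (intro ext, case_tac n) auto
    show ?thesis unfolding F_def e by (rule lub_eq[OF FM is_lub_const])
  qed
  have isf: "is_flow X E infl F"
    unfolding is_flow_def
  proof
    fix x assume x: "x \<in> X"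
    let ?K = "\<lambda>n. \<Sum>y\<in>X. E y x (kit X E infl n y)"
    have chy: "asc_chain (\<lambda>n. E y x (kit X E infl n y))" if "y \<in> X" for y
      using H that ch by (auto intro: asc_chain_dist)
    have cK: "asc_chain ?K" using chy by (rule asc_chain_sum)
    have e1: "lub (range (\<lambda>n. E y x (kit X E infl n y))) = E y x (F y)" if "y \<in> X" for y
      unfolding F_def using H that ch by (simp add: mcont_lub[OF FM])
    have "lub (range ?K) = (\<Sum>y\<in>X. lub (range (\<lambda>n. E y x (kit X E infl n y))))"
      by (rule lub_eq[OF FM lub_sum[OF FM fin chy]])
    also have "\<dots> = (\<Sum>y\<in>X. E y x (F y))" using e1 by simp
    finally have lk: "lub (range ?K) = (\<Sum>y\<in>X. E y x (F y))" .
    have "F x = lub (range (\<lambda>n. kit X E infl (Suc n) x))"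
      unfolding F_def by (rule lub_shift[OF FM ch, symmetric])
    also have "\<dots> = lub (range (\<lambda>n. inflow_at X infl x + ?K n))" using x by simp
    also have "\<dots> = inflow_at X infl x + lub (range ?K)"
      by (rule lub_eq[OF FM chain_lub_add[OF FM cK]])
    finally show "F x = inflow_at X infl x + (\<Sum>y\<in>X. E y x (F y))" using lk by simp
  qed
  have least: "\<forall>x\<in>X. mle (F x) (G x)" if G: "is_flow X E infl G" for G
  proof -
    have "\<forall>x\<in>X. mle (kit X E infl n x) (G x)" for n
    proof (induction n)
      case 0 then show ?case by (simp add: mle_0)
    next
      case (Suc n)
      show ?case
      proof
        fix x assume x: "x \<in> X"
        have "G x = inflow_at X infl x + (\<Sum>y\<in>X. E y x (G y))" using G x unfolding is_flow_def by blast
        have "mle (\<Sum>y\<in>X. E y x (kit X E infl n y)) (\<Sum>y\<in>X. E y x (G y))"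
        proof (rule mle_sum_mono)
          fix y assume y: "y \<in> X"
          then have "distributive (E y x)" using H by blast
          then show "mle (E y x (kit X E infl n y)) (E y x (G y))"
            using Suc y by (blast intro: sum_mle_dist_mono)
        qed
        then show "mle (kit X E infl (Suc n) x) (G x)"
          using x \<open>G x = _\<close> by (simp add: mle_refl mle_add_mono)
      qed
    qed
    then show ?thesis unfolding F_def
      by (auto intro!: is_lub_least[OF chain_lub[OF FM ch]])
  qed
  have P: "is_flow X E infl F \<and> (\<forall>fl'. is_flow X E infl fl' \<longrightarrow> (\<forall>x\<in>X. mle (F x) (fl' x))) \<and> (\<forall>x. x \<notin> X \<longrightarrow> F x = 0)"
    using isf least out by blast
  have "flow X E infl = F"
    unfolding flow_def
  proof (rule the_equality)
    show "is_flow X E infl F \<and> (\<forall>fl'. is_flow X E infl fl' \<longrightarrow> (\<forall>x\<in>X. mle (F x) (fl' x))) \<and> (\<forall>x. x \<notin> X \<longrightarrow> F x = 0)"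
      by (rule P)
  next
    fix g assume g: "is_flow X E infl g \<and> (\<forall>fl'. is_flow X E infl fl' \<longrightarrow> (\<forall>x\<in>X. mle (g x) (fl' x))) \<and> (\<forall>x. x \<notin> X \<longrightarrow> g x = 0)"
    show "g = F"
    proof
      fix x show "g x = F x"
      proof (cases "x \<in> X")
        case True
        have 1: "mle (g x) (F x)" using g isf True by blast
        have 2: "mle (F x) (g x)" using least g True by blast
        show ?thesis using mle_antisym[OF FM 1 2] .
      next
        case False
        then show ?thesis using g out by simp
      qed
    qed
  qed
  then show ?thesis unfolding F_def .
qed

end

lemma kit_paths:
  assumes fin: "finite X" and H: "\<forall>x\<in>X. \<forall>w. mcont (E x w) \<and> distributive (E x w)"
  shows "y \<in> X \<Longrightarrow> kit X E infl n y = (\<Sum>x\<in>X. \<Sum>p\<in>Pn X n x y. inner_edges E p (inflow_at X infl x))"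
proof (induction n arbitrary: y)
  case 0 then show ?case by (simp add: Pn_0)
next
  case (Suc n)
  let ?I = "\<lambda>x. inflow_at X infl x"
  have inner: "(\<Sum>p\<in>Pn X (Suc n) x y. inner_edges E p (?I x)) =
      (if x = y then ?I x else 0) + (\<Sum>w\<in>X. \<Sum>p\<in>Pn X n x w. E w y (inner_edges E p (?I x)))" for x
  proof -
    have fU: "finite (\<Union>w\<in>X. (\<lambda>p. p @ [y]) ` Pn X n x w)" using fin Pn_finite by auto
    have disj: "(if x = y then {[y]} else {}) \<inter> (\<Union>w\<in>X. (\<lambda>p. p @ [y]) ` Pn X n x w) = {}"
      unfolding Pn_def by auto
    have "(\<Sum>p\<in>Pn X (Suc n) x y. inner_edges E p (?I x)) =
        (\<Sum>p\<in>(if x = y then {[y]} else {}). inner_edges E p (?I x)) +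
        (\<Sum>p\<in>(\<Union>w\<in>X. (\<lambda>p. p @ [y]) ` Pn X n x w). inner_edges E p (?I x))"
      unfolding Pn_Suc[OF Suc.prems] by (rule sum.union_disjoint) (use fU disj in auto)
    also have "(\<Sum>p\<in>(if x = y then {[y]} else {}). inner_edges E p (?I x)) = (if x = y then ?I x else 0)"
      by simp
    also have "(\<Sum>p\<in>(\<Union>w\<in>X. (\<lambda>p. p @ [y]) ` Pn X n x w). inner_edges E p (?I x)) =
        (\<Sum>w\<in>X. \<Sum>p\<in>(\<lambda>p. p @ [y]) ` Pn X n x w. inner_edges E p (?I x))"
      by (rule sum.UNION_disjoint) (use fin Pn_finite in \<open>auto simp: Pn_def\<close>)
    also have "\<dots> = (\<Sum>w\<in>X. \<Sum>p\<in>Pn X n x w. inner_edges E (p @ [y]) (?I x))"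
      by (rule sum.cong[OF refl], subst sum.reindex) (auto simp: inj_on_def)
    also have "\<dots> = (\<Sum>w\<in>X. \<Sum>p\<in>Pn X n x w. E w y (inner_edges E p (?I x)))"
      by (intro sum.cong refl) (auto simp: Pn_def inner_snoc)
    finally show ?thesis .
  qed
  have "kit X E infl (Suc n) y = ?I y + (\<Sum>w\<in>X. E w y (kit X E infl n w))"
    using Suc.prems by simp
  also have "\<dots> = ?I y + (\<Sum>w\<in>X. E w y (\<Sum>x\<in>X. \<Sum>p\<in>Pn X n x w. inner_edges E p (?I x)))"
    by (intro arg_cong2[where f="(+)"] refl sum.cong) (simp add: Suc.IH)
  also have "\<dots> = ?I y + (\<Sum>w\<in>X. \<Sum>x\<in>X. \<Sum>p\<in>Pn X n x w. E w y (inner_edges E p (?I x)))"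
  proof (intro arg_cong2[where f="(+)"] refl sum.cong)
    fix w assume "w \<in> X"
    then have d: "distributive (E w y)" using H by blast
    show "E w y (\<Sum>x\<in>X. \<Sum>p\<in>Pn X n x w. inner_edges E p (?I x)) = (\<Sum>x\<in>X. \<Sum>p\<in>Pn X n x w. E w y (inner_edges E p (?I x)))"
      by (simp only: dist_sum[OF d])
  qed
  also have "\<dots> = (\<Sum>x\<in>X. (if x = y then ?I x else 0)) + (\<Sum>x\<in>X. \<Sum>w\<in>X. \<Sum>p\<in>Pn X n x w. E w y (inner_edges E p (?I x)))"
  proof -
    have "(\<Sum>x\<in>X. (if x = y then ?I x else 0)) = ?I y" using Suc.prems fin by simp
    moreover have "(\<Sum>w\<in>X. \<Sum>x\<in>X. \<Sum>p\<in>Pn X n x w. E w y (inner_edges E p (?I x))) = (\<Sum>x\<in>X. \<Sum>w\<in>X. \<Sum>p\<in>Pn X n x w. E w y (inner_edges E p (?I x)))"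
      by (rule sum.swap)
    ultimately show ?thesis by simp
  qed
  also have "\<dots> = (\<Sum>x\<in>X. \<Sum>p\<in>Pn X (Suc n) x y. inner_edges E p (?I x))"
    by (simp only: inner sum.distrib)
  finally show ?case .
qed


lemma paths_union: "z \<notin> X \<Longrightarrow> (\<Union>n. Pn X n x y) = paths (X, E, in0) x y z"
  unfolding paths_def Pn_def by auto

theorem theorem3:
  fixes X :: "nat set" and E :: "nat \<Rightarrow> nat \<Rightarrow> 'm::comm_monoid_add \<Rightarrow> 'm"
    and in0 infl :: "nat \<Rightarrow> nat \<Rightarrow> 'm" and y z :: nat
  assumes "flow_monoid TYPE('m)"
    and "finite X"
    and "\<forall>x\<in>X. \<forall>w. mcont (E x w) \<and> distributive (E x w)"
    and "y \<in> X" and "z \<notin> X"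
  shows "tf (X, E, in0) infl y z =
    (\<Sum>x\<in>X. msum (\<lambda>p. path_fun E p z (inflow_at X infl x)) (paths (X, E, in0) x y z))"
proof -
  note FM = assms(1) and fin = assms(2) and H = assms(3) and yX = assms(4) and zX = assms(5)
  define I where "I = (\<lambda>x. inflow_at X infl x)"
  define Q where "Q = (\<lambda>n. \<Sum>x\<in>X. \<Sum>p\<in>Pn X n x y. path_fun E p z (I x))"
  have my: "mcont (E y z)" and dy: "distributive (E y z)" using H yX by auto
  have ch: "asc_chain (\<lambda>n. kit X E infl n y)" by (rule kit_chain[OF FM H])
  have "tf (X, E, in0) infl y z = E y z (flow X E infl y)"
    unfolding tf_def outflow_def using yX zX by simp
  also have "\<dots> = E y z (lub (range (\<lambda>n. kit X E infl n y)))"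
    by (simp add: flow_eq[OF FM fin H])
  also have "\<dots> = lub (range (\<lambda>n. E y z (kit X E infl n y)))"
    by (rule mcont_lub[OF FM my ch])
  also have "(\<lambda>n. E y z (kit X E infl n y)) = Q"
  proof
    fix n
    have "E y z (kit X E infl n y) = (\<Sum>x\<in>X. \<Sum>p\<in>Pn X n x y. E y z (inner_edges E p (I x)))"
      unfolding kit_paths[OF fin H yX] I_def dist_sum[OF dy] by simp
    also have "\<dots> = Q n"
      unfolding Q_def by (intro sum.cong refl) (auto simp: path_fun_def Pn_def)
    finally show "E y z (kit X E infl n y) = Q n" .
  qed
  also have "lub (range Q) = (\<Sum>x\<in>X. lub (range (\<lambda>n. \<Sum>p\<in>Pn X n x y. path_fun E p z (I x))))"
    unfolding Q_def
  proof (rule lub_eq[OF FM lub_sum[OF FM fin]])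
    fix x assume "x \<in> X"
    show "asc_chain (\<lambda>n. \<Sum>p\<in>Pn X n x y. path_fun E p z (I x))"
      unfolding asc_chain_def using mle_sum_subset[OF Pn_finite[OF fin] Pn_mono] by blast
  qed
  also have "\<dots> = (\<Sum>x\<in>X. msum (\<lambda>p. path_fun E p z (inflow_at X infl x)) (paths (X, E, in0) x y z))"
  proof (intro sum.cong refl)
    fix x assume "x \<in> X"
    show "lub (range (\<lambda>n. \<Sum>p\<in>Pn X n x y. path_fun E p z (I x))) =
        msum (\<lambda>p. path_fun E p z (inflow_at X infl x)) (paths (X, E, in0) x y z)"
      unfolding I_def
      by (rule msum_chain[OF FM Pn_finite[OF fin] Pn_mono paths_union[OF zX], symmetric])
  qed
  finally show ?thesis .
qed

end
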